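(* Let $I_n$ denote the number of inversion sequences of length $n$ avoiding all of the patterns $100$, $102$, $201$ (with $I_0=1$). Then $$\sum_{n\ge0} I_n z^n=\frac{2+z-10z^2+4z^3-(2-3z)\sqrt{1-4z-4z^2}}{8z(1-z)^2}.$$
   Context: An inversion sequence of length $n$ is an integer sequence $(a_1,\dots,a_n)$ with $0\le a_i<i$ for all $i$. A pattern is a sequence $\sigma$ of non-negative integers containing every value from $0$ to $\max(\sigma)$; the reduction of a sequence replaces its smallest values by $0$, the next smallest by $1$, etc. A sequence $a$ contains $\sigma$ if some (not necessarily consecutive) subsequence of $a$ has reduction $\sigma$; otherwise $a$ avoids $\sigma$. Equivalently, these are the inversion sequences with no $i<j<k$ such that $a_i>a_j$, $a_j\le a_k$ and $a_i\ne a_k$. The square root is the power series with constant term $1$. *)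

theory Defs
  imports "HOL-Computational_Algebra.Formal_Power_Series"
begin

text \<open>Inversion sequence of length n (0-based indexing): a ! i < i + 1, i.e. 0 <= a_i < i in 1-based indexing.\<close>
definition inv_seq :: "nat list \<Rightarrow> bool" where
  "inv_seq a \<longleftrightarrow> (\<forall>i < length a. a ! i < Suc i)"

definition reduction :: "nat list \<Rightarrow> nat list" where
  "reduction s = map (\<lambda>x. card {y \<in> set s. y < x}) s"

definition contains_pattern :: "nat list \<Rightarrow> nat list \<Rightarrow> bool" where
  "contains_pattern a \<sigma> \<longleftrightarrow> (\<exists>t \<in> set (subseqs a). reduction t = \<sigma>)"

definition avoids :: "nat list \<Rightarrow> nat list \<Rightarrow> bool" where
  "avoids a \<sigma> \<longleftrightarrow> \<not> contains_pattern a \<sigma>"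

definition I_count :: "nat \<Rightarrow> nat" where
  "I_count n = card {a. length a = n \<and> inv_seq a \<and> avoids a [1,0,0] \<and> avoids a [1,0,2] \<and> avoids a [2,0,1]}"

end

theory Submission
  imports Defs "HOL-Library.Sublist"
begin

unbundle fps_syntax


lemma card_lt3: "card {s \<in> set [x,y,z::nat]. s < t} = (if x < t then 1 else 0) + (if y < t \<and> y \<noteq> x then 1 else 0) + (if z < t \<and> z \<noteq> x \<and> z \<noteq> y then 1 else 0)"
proof -
  have "{s \<in> set [x,y,z]. s < t} = (if x < t then {x} else {}) \<union> (if y < t then {y} else {}) \<union> (if z < t then {z} else {})"
    by auto
  then show ?thesis by (auto simp: card_insert_if)
qed

lemma red3: "reduction [x,y,z] = [card {s \<in> set [x,y,z::nat]. s < x}, card {s \<in> set [x,y,z::nat]. s < y}, card {s \<in> set [x,y,z::nat]. s < z}]"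
  unfolding reduction_def by (simp only: list.map)

lemma p100: "reduction [x,y,z] = [1,0,0] \<longleftrightarrow> y < x \<and> z = y"
  unfolding red3 card_lt3 by auto
lemma p102: "reduction [x,y,z] = [1,0,2] \<longleftrightarrow> y < x \<and> x < z"
  unfolding red3 card_lt3 by auto
lemma p201: "reduction [x,y,z] = [2,0,1] \<longleftrightarrow> y < z \<and> z < x"
  unfolding red3 card_lt3 by auto


lemma subseq_Cons_iff: "subseq (x#xs) ys \<longleftrightarrow> (\<exists>i<length ys. ys!i = x \<and> subseq xs (drop (Suc i) ys))"
proof
  assume "subseq (x#xs) ys"
  from list_emb_ConsD[OF this] obtain us v vs where h: "ys = us @ v # vs" "x = v" "subseq xs vs"
    by blast
  show "\<exists>i<length ys. ys!i = x \<and> subseq xs (drop (Suc i) ys)"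
    apply (rule exI[of _ "length us"]) using h by simp
next
  assume "\<exists>i<length ys. ys!i = x \<and> subseq xs (drop (Suc i) ys)"
  then obtain i where i: "i < length ys" "ys!i = x" "subseq xs (drop (Suc i) ys)" by blast
  have e: "ys = take i ys @ (ys!i # drop (Suc i) ys)" using i(1) by (simp add: id_take_nth_drop)
  have "subseq (x # xs) (ys!i # drop (Suc i) ys)" using i by simp
  then have "subseq (x # xs) (take i ys @ (ys!i # drop (Suc i) ys))" by (rule list_emb_append2)
  then show "subseq (x#xs) ys" using e by simp
qed


lemma subseq3: "subseq [x,y,z] a \<longleftrightarrow> (\<exists>i j k. i<j \<and> j<k \<and> k<length a \<and> a!i = x \<and> a!j = y \<and> a!k = z)"
proof
  assume "subseq [x,y,z] a"
  from subseq_Cons_iff[THEN iffD1, OF this] obtain i where i: "i < length a" "a!i = x" "subseq [y,z] (drop (Suc i) a)"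
    by blast
  from subseq_Cons_iff[THEN iffD1, OF i(3)] obtain j where j: "j < length (drop (Suc i) a)" "drop (Suc i) a ! j = y" "subseq [z] (drop (Suc j) (drop (Suc i) a))"
    by blast
  from subseq_Cons_iff[THEN iffD1, OF j(3)] obtain k where k: "k < length (drop (Suc j) (drop (Suc i) a))" "drop (Suc j) (drop (Suc i) a) ! k = z"
    by blast
  have "i < Suc i + j" "Suc i + j < Suc i + Suc j + k" "Suc i + Suc j + k < length a"
    "a ! (Suc i + j) = y" "a ! (Suc i + Suc j + k) = z"
    using i j k by (simp_all add: ac_simps)
  then show "\<exists>i j k. i<j \<and> j<k \<and> k<length a \<and> a!i = x \<and> a!j = y \<and> a!k = z"
    using i(2) by metis
next
  assume "\<exists>i j k. i<j \<and> j<k \<and> k<length a \<and> a!i = x \<and> a!j = y \<and> a!k = z"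
  then obtain i j k where h: "i<j" "j<k" "k<length a" "a!i = x" "a!j = y" "a!k = z" by blast
  have s1: "subseq [z] (drop (Suc j) a)"
    apply (rule subseq_Cons_iff[THEN iffD2]) apply (rule exI[of _ "k - Suc j"]) using h by simp
  have s2: "subseq [y,z] (drop (Suc i) a)"
    apply (rule subseq_Cons_iff[THEN iffD2]) apply (rule exI[of _ "j - Suc i"]) using h s1 by simp
  show "subseq [x,y,z] a"
    apply (rule subseq_Cons_iff[THEN iffD2]) apply (rule exI[of _ i]) using h s2 by simp
qed

definition good :: "nat list \<Rightarrow> bool" where
  "good a \<longleftrightarrow> (\<forall>i j k. i < j \<longrightarrow> j < k \<longrightarrow> k < length a \<longrightarrow> a!j < a!i \<longrightarrow> a!k < a!j \<or> a!k = a!i)"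

lemma len3: "length t = 3 \<Longrightarrow> \<exists>x y z. t = [x,y,z]"
  by (cases t; simp; case_tac list; simp; case_tac lista; simp)

lemma contains3: "length \<sigma> = 3 \<Longrightarrow> contains_pattern a \<sigma> \<longleftrightarrow>
   (\<exists>i j k. i<j \<and> j<k \<and> k<length a \<and> reduction [a!i, a!j, a!k] = \<sigma>)"
proof -
  assume l: "length \<sigma> = 3"
  have "contains_pattern a \<sigma> \<longleftrightarrow> (\<exists>x y z. subseq [x,y,z] a \<and> reduction [x,y,z] = \<sigma>)"
  proof
    assume "contains_pattern a \<sigma>"
    then obtain t where t: "subseq t a" "reduction t = \<sigma>" unfolding contains_pattern_def by auto
    then have "length t = 3" using l unfolding reduction_def by (metis length_map)
    then obtain x y z where "t = [x,y,z]" using len3 by blast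
    then show "\<exists>x y z. subseq [x,y,z] a \<and> reduction [x,y,z] = \<sigma>" using t by blast
  next
    assume "\<exists>x y z. subseq [x,y,z] a \<and> reduction [x,y,z] = \<sigma>"
    then show "contains_pattern a \<sigma>" unfolding contains_pattern_def by auto
  qed
  also have "\<dots> \<longleftrightarrow> (\<exists>i j k. i<j \<and> j<k \<and> k<length a \<and> reduction [a!i, a!j, a!k] = \<sigma>)"
  proof
    assume "\<exists>x y z. subseq [x,y,z] a \<and> reduction [x,y,z] = \<sigma>"
    then obtain x y z where h: "subseq [x,y,z] a" "reduction [x,y,z] = \<sigma>" by blast
    from h(1)[unfolded subseq3] obtain i j k where "i<j" "j<k" "k<length a" "a!i = x" "a!j = y" "a!k = z"
      by blast
    then show "\<exists>i j k. i<j \<and> j<k \<and> k<length a \<and> reduction [a!i, a!j, a!k] = \<sigma>" using h(2) by blast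
  next
    assume "\<exists>i j k. i<j \<and> j<k \<and> k<length a \<and> reduction [a!i, a!j, a!k] = \<sigma>"
    then obtain i j k where h: "i<j" "j<k" "k<length a" "reduction [a!i, a!j, a!k] = \<sigma>" by blast
    have "subseq [a!i,a!j,a!k] a" unfolding subseq3 using h by blast
    then show "\<exists>x y z. subseq [x,y,z] a \<and> reduction [x,y,z] = \<sigma>" using h(4) by blast
  qed
  finally show ?thesis .
qed

lemma cond3: "(y < x \<and> \<not> (z < y \<or> z = x)) \<longleftrightarrow> ((y < x \<and> z = y) \<or> (y < x \<and> x < z) \<or> (y < z \<and> z < (x::nat)))"
  by auto

lemma avoid_iff_good: "avoids a [1,0,0] \<and> avoids a [1,0,2] \<and> avoids a [2,0,1] \<longleftrightarrow> good a"
proof -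
  have l: "length [1,0,0::nat] = 3" "length [1,0,2::nat] = 3" "length [2,0,1::nat] = 3" by simp_all
  have "good a \<longleftrightarrow> \<not>(\<exists>i j k. i<j \<and> j<k \<and> k<length a \<and> (a!j < a!i \<and> \<not> (a!k < a!j \<or> a!k = a!i)))"
    unfolding good_def by blast
  also have "\<dots> \<longleftrightarrow> \<not>(\<exists>i j k. i<j \<and> j<k \<and> k<length a \<and> ((a!j < a!i \<and> a!k = a!j) \<or> (a!j < a!i \<and> a!i < a!k) \<or> (a!j < a!k \<and> a!k < a!i)))"
    by (simp only: cond3)
  also have "\<dots> \<longleftrightarrow> avoids a [1,0,0] \<and> avoids a [1,0,2] \<and> avoids a [2,0,1]"
    unfolding avoids_def contains3[OF l(1)] contains3[OF l(2)] contains3[OF l(3)] p100 p102 p201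
    by blast
  finally show ?thesis by simp
qed


definition WI :: "nat \<Rightarrow> nat list set" where
  "WI p = {w. length w = p \<and> inv_seq w \<and> sorted w}"

lemma inv_seq_snoc: "inv_seq (w @ [x]) \<longleftrightarrow> inv_seq w \<and> x \<le> length w"
  unfolding inv_seq_def by (auto simp: nth_append less_Suc_eq)

lemma inv_seq_set: "inv_seq w \<Longrightarrow> set w \<subseteq> {..<length w}"
  unfolding inv_seq_def by (auto simp: in_set_conv_nth) (meson less_trans_Suc not_less_eq)

lemma finite_WI: "finite (WI p)"
proof -
  have "WI p \<subseteq> {xs. set xs \<subseteq> {..<p} \<and> length xs = p}"
    unfolding WI_def using inv_seq_set by auto
  then show ?thesis using finite_lists_length_eq[of "{..<p}" p] finite_subset by blast
qed

lemma sorted_le_last: assumes s: "sorted w" and ne: "w \<noteq> []" and y: "y \<in> set w" shows "y \<le> last w"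
proof -
  have e: "w = butlast w @ [last w]" using ne by simp
  then have "sorted (butlast w @ [last w])" using s by simp
  then have "\<forall>x\<in>set (butlast w). x \<le> last w" by (simp add: sorted_append)
  moreover have "y \<in> set (butlast w) \<or> y = last w" using y e
    by (metis Un_iff empty_iff empty_set set_ConsD set_append)
  ultimately show ?thesis by auto
qed

lemma WI_last_lt: "w \<in> WI p \<Longrightarrow> p \<ge> 1 \<Longrightarrow> last w < p"
proof -
  assume w: "w \<in> WI p" and p: "p \<ge> 1"
  then have "w \<noteq> []" unfolding WI_def by auto
  then have "last w \<in> set w" by simp
  moreover have "set w \<subseteq> {..<p}" using w inv_seq_set unfolding WI_def by auto
  ultimately show "last w < p" by auto
qed

lemma WI_0: "WI 0 = {[]}"
  unfolding WI_def inv_seq_def by auto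

lemma WI_1: "WI (Suc 0) = {[0]}"
proof -
  have "w \<in> WI (Suc 0) \<longleftrightarrow> w = [0]" for w
    unfolding WI_def inv_seq_def by (cases w) auto
  then show ?thesis by auto
qed

lemma WI_Suc: assumes "p \<ge> 1"
  shows "WI (Suc p) = (\<lambda>(w,x). w @ [x]) ` (SIGMA w:WI p. {last w..p})"
proof (intro set_eqI iffI)
  fix a assume a: "a \<in> WI (Suc p)"
  then have "a \<noteq> []" unfolding WI_def by auto
  then obtain w x where ax: "a = w @ [x]" by (metis append_butlast_last_id)
  have lw: "length w = p" using a ax unfolding WI_def by auto
  then have "w \<noteq> []" using assms by auto
  then have "last w \<le> x" using a ax unfolding WI_def by (simp add: sorted_append)
  moreover have "x \<le> p" "w \<in> WI p" using a ax lw unfolding WI_def by (auto simp: inv_seq_snoc sorted_append)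
  ultimately show "a \<in> (\<lambda>(w,x). w @ [x]) ` (SIGMA w:WI p. {last w..p})" using ax by auto
next
  fix a assume "a \<in> (\<lambda>(w,x). w @ [x]) ` (SIGMA w:WI p. {last w..p})"
  then obtain w x where h: "a = w @ [x]" "w \<in> WI p" "last w \<le> x" "x \<le> p" by auto
  have "w \<noteq> []" using h(2) assms unfolding WI_def by auto
  then have "\<forall>y\<in>set w. y \<le> x" using h sorted_le_last[of w] unfolding WI_def by force
  then show "a \<in> WI (Suc p)" using h unfolding WI_def by (auto simp: inv_seq_snoc sorted_append)
qed

lemma sum_WI_Suc: assumes "p \<ge> 1"
  shows "sum f (WI (Suc p)) = (\<Sum>w\<in>WI p. \<Sum>x=last w..p. f (w @ [x]))"
proof -
  have inj: "inj_on (\<lambda>(w,x). w @ [x]) (SIGMA w:WI p. {last w..p})"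
    by (auto simp: inj_on_def)
  have "sum f (WI (Suc p)) = sum (f \<circ> (\<lambda>(w,x). w @ [x])) (SIGMA w:WI p. {last w..p})"
    unfolding WI_Suc[OF assms] by (rule sum.reindex[OF inj])
  also have "\<dots> = (\<Sum>(w,x)\<in>(SIGMA w:WI p. {last w..p}). f (w @ [x]))"
    by (rule sum.cong) auto
  also have "\<dots> = (\<Sum>w\<in>WI p. \<Sum>x=last w..p. f (w @ [x]))"
    by (rule sum.Sigma[symmetric]) (auto simp: finite_WI)
  finally show ?thesis .
qed


lemma geo1: "((u::'a::comm_ring_1) - 1) * (\<Sum>x\<in>{v..<v+d}. u^x) = u^(v+d) - u^v"
proof (induction d)
  case 0 then show ?case by simp
next
  case (Suc d)
  have "(u - 1) * (\<Sum>x\<in>{v..<v+Suc d}. u^x) = (u - 1) * (\<Sum>x\<in>{v..<v+d}. u^x) + (u-1) * u^(v+d)"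
    by (simp add: distrib_left)
  also have "\<dots> = u^(v + Suc d) - u^v" using Suc by (simp add: algebra_simps)
  finally show ?case .
qed

lemma alg1: assumes h1: "((u::'a::comm_ring_1)-1)^2*S = b*u - a - (1+n)*(u-1)*a" and h2: "(u-1)*T = b*u - a"
  shows "(u-1)^2*(S+T) = b*u*u - a - (n+2)*(u-1)*a"
proof -
  have "(u-1)^2*(S+T) = (u-1)^2*S + (u-1)*((u-1)*T)" by (simp add: algebra_simps power2_eq_square)
  also have "\<dots> = (b*u - a - (1+n)*(u-1)*a) + (u-1)*(b*u - a)" unfolding h1 h2 ..
  also have "\<dots> = b*u*u - a - (n+2)*(u-1)*a" by (simp add: algebra_simps)
  finally show ?thesis .
qed

lemma alg2: assumes h1: "(T::'a::comm_ring_1) = T' - n * a" and h2: "(u - 1) * T' = b - a"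
  shows "(u - 1) * T = b - a - n * (u - 1) * a"
proof -
  have "(u - 1) * T = (u - 1) * T' - n * (u - 1) * a" unfolding h1 by (simp add: algebra_simps)
  then show ?thesis unfolding h2 .
qed

lemma geo2: "((u::'a::comm_ring_1) - 1)^2 * (\<Sum>x\<in>{v..<v+d}. of_nat (v+d-x) * u^x)
   = u^(v+d+1) - u^v - of_nat (d+1) * (u-1) * u^v"
proof (induction d)
  case 0 then show ?case by (simp add: algebra_simps power2_eq_square)
next
  case (Suc d)
  have "(\<Sum>x\<in>{v..<v+Suc d}. of_nat (v+Suc d-x) * (u::'a)^x)
      = (\<Sum>x\<in>{v..<v+Suc d}. of_nat (v+d-x) * u^x + u^x)"
    by (rule sum.cong) (auto simp: Suc_diff_le algebra_simps)
  also have "\<dots> = (\<Sum>x\<in>{v..<v+d}. of_nat (v+d-x) * u^x) + (\<Sum>x\<in>{v..<v+Suc d}. u^x)"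
    by (simp add: sum.distrib)
  finally have e: "(\<Sum>x\<in>{v..<v+Suc d}. of_nat (v+Suc d-x) * (u::'a)^x)
      = (\<Sum>x\<in>{v..<v+d}. of_nat (v+d-x) * u^x) + (\<Sum>x\<in>{v..<v+Suc d}. u^x)" .
  have g: "(u - 1) * (\<Sum>x\<in>{v..<v+Suc d}. u^x) = u^(v+Suc d) - u^v" by (rule geo1)
  define S where "S = (\<Sum>x\<in>{v..<v+d}. of_nat (v+d-x) * (u::'a)^x)"
  define T where "T = (\<Sum>x\<in>{v..<v+Suc d}. (u::'a)^x)"
  have h1: "(u - 1)^2 * S = u^(v+d) * u - u^v - (1 + of_nat d) * (u-1) * u^v"
    using Suc unfolding S_def by simp
  have h2: "(u - 1) * T = u^(v+d) * u - u^v" using g unfolding T_def by simp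
  have "(u - 1)^2 * (S + T) = u^(v+d) * u * u - u^v - (of_nat d + 2) * (u-1) * u^v"
    using alg1[OF h1 h2] .
  then show ?case unfolding e S_def[symmetric] T_def[symmetric] by (simp add: algebra_simps)
qed

lemma geo3: "((u::'a::comm_ring_1) - 1)^2 * (\<Sum>x\<in>{v..<v+d}. \<Sum>b\<in>{v..<x}. u^b)
   = u^(v+d) - u^v - of_nat d * (u-1) * u^v"
proof -
  have "((u::'a::comm_ring_1) - 1)^2 * (\<Sum>x\<in>{v..<v+d}. \<Sum>b\<in>{v..<x}. u^b)
      = (u - 1) * (\<Sum>x\<in>{v..<v+d}. (u - 1) * (\<Sum>b\<in>{v..<x}. u^b))"
    by (simp add: power2_eq_square sum_distrib_left mult.assoc)
  also have "\<dots> = (u - 1) * (\<Sum>x\<in>{v..<v+d}. u^x - u^v)"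
  proof -
    have "(u - 1) * (\<Sum>b\<in>{v..<x}. u^b) = u^x - u^v" if "x \<in> {v..<v+d}" for x
      using geo1[of u v "x - v"] that by simp
    then show ?thesis by (intro arg_cong[where f="\<lambda>t. (u-1) * t"] sum.cong) auto
  qed
  also have "\<dots> = u^(v+d) - u^v - of_nat d * (u-1) * u^v"
  proof -
    define T where "T = (\<Sum>x\<in>{v..<v+d}. u^x)"
    have "(\<Sum>x\<in>{v..<v+d}. u^x - u^v) = T - of_nat d * u^v" unfolding T_def by (simp add: sum_subtractf)
    moreover have "(u - 1) * T = u^(v+d) - u^v" unfolding T_def by (rule geo1)
    ultimately show ?thesis by (rule alg2)
  qed
  finally show ?thesis .
qed

definition Cat :: "nat \<Rightarrow> nat" where "Cat p = card (WI p)"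
definition Qf :: "'a::comm_ring_1 \<Rightarrow> nat \<Rightarrow> 'a" where "Qf u p = (\<Sum>w\<in>WI p. u ^ last w)"
definition Yf :: "'a::comm_ring_1 \<Rightarrow> nat \<Rightarrow> 'a" where "Yf u p = (\<Sum>w\<in>WI p. of_nat (p - last w) * u ^ last w)"
definition ext :: "nat list \<Rightarrow> nat \<Rightarrow> bool" where "ext w b \<longleftrightarrow> (\<forall>x\<in>set w. b < x \<longrightarrow> x = last w)"
definition Ef :: "'a::comm_ring_1 \<Rightarrow> nat \<Rightarrow> 'a" where "Ef u p = (\<Sum>w\<in>WI p. \<Sum>b\<in>{b. b < last w \<and> ext w b}. u ^ b)"

lemma WI_ne: "w \<in> WI p \<Longrightarrow> p \<ge> 1 \<Longrightarrow> w \<noteq> []"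
  unfolding WI_def by auto

lemma WI_sorted: "w \<in> WI p \<Longrightarrow> sorted w"
  unfolding WI_def by auto

lemma atLeastAtMost_conv: "v \<le> p \<Longrightarrow> {v..p} = {v..<v + (Suc p - v)}"
  by auto

lemma Q_rec: assumes "p \<ge> 1"
  shows "((u::'a::comm_ring_1) - 1) * Qf u (Suc p) = of_nat (Cat p) * u^(Suc p) - Qf u p"
proof -
  have "(u - 1) * Qf u (Suc p) = (\<Sum>w\<in>WI p. (u - 1) * (\<Sum>x=last w..p. u^x))"
    unfolding Qf_def sum_WI_Suc[OF assms] by (simp add: sum_distrib_left)
  also have "\<dots> = (\<Sum>w\<in>WI p. u^(Suc p) - u ^ last w)"
  proof (rule sum.cong[OF refl])
    fix w assume w: "w \<in> WI p"
    have "last w \<le> p" using WI_last_lt[OF w assms] by simp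
    then show "(u - 1) * (\<Sum>x=last w..p. u^x) = u^(Suc p) - u ^ last w"
      unfolding atLeastAtMost_conv[OF \<open>last w \<le> p\<close>] geo1 by simp
  qed
  also have "\<dots> = of_nat (Cat p) * u^(Suc p) - Qf u p"
    unfolding Qf_def Cat_def by (simp add: sum_subtractf)
  finally show ?thesis .
qed

lemma Y_rec: assumes "p \<ge> 1"
  shows "((u::'a::comm_ring_1) - 1)^2 * Yf u (Suc p) = of_nat (Cat p) * u^(Suc (Suc p)) - Qf u p - (u - 1) * (Yf u p + 2 * Qf u p)"
proof -
  have "(u - 1)^2 * Yf u (Suc p) = (\<Sum>w\<in>WI p. (u - 1)^2 * (\<Sum>x=last w..p. of_nat (Suc p - x) * u^x))"
    unfolding Yf_def sum_WI_Suc[OF assms] by (simp add: sum_distrib_left)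
  also have "\<dots> = (\<Sum>w\<in>WI p. u^(Suc (Suc p)) - u ^ last w - (u - 1) * (of_nat (p - last w) * u ^ last w + 2 * u ^ last w))"
  proof (rule sum.cong[OF refl])
    fix w assume w: "w \<in> WI p"
    have lp: "last w \<le> p" using WI_last_lt[OF w assms] by simp
    have "(u - 1)^2 * (\<Sum>x=last w..p. of_nat (Suc p - x) * u^x)
       = (u - 1)^2 * (\<Sum>x\<in>{last w..<last w + (Suc p - last w)}. of_nat (last w + (Suc p - last w) - x) * u^x)"
      unfolding atLeastAtMost_conv[OF lp] using lp by simp
    also have "\<dots> = u^(Suc (Suc p)) - u ^ last w - of_nat (Suc p - last w + 1) * (u-1) * u^last w"
      unfolding geo2 using lp by simp
    also have "\<dots> = u^(Suc (Suc p)) - u ^ last w - (u - 1) * (of_nat (p - last w) * u ^ last w + 2 * u ^ last w)"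
      using lp by (simp add: Suc_diff_le algebra_simps)
    finally show "(u - 1)^2 * (\<Sum>x=last w..p. of_nat (Suc p - x) * u^x) = u^(Suc (Suc p)) - u ^ last w - (u - 1) * (of_nat (p - last w) * u ^ last w + 2 * u ^ last w)" .
  qed
  also have "\<dots> = of_nat (Cat p) * u^(Suc (Suc p)) - Qf u p - (u - 1) * (Yf u p + 2 * Qf u p)"
    unfolding Qf_def Cat_def Yf_def by (simp add: sum_subtractf sum.distrib sum_distrib_left distrib_left)
  finally show ?thesis .
qed

lemma ext_snoc_eq: assumes "w \<noteq> []" shows "ext (w @ [last w]) b \<longleftrightarrow> ext w b"
  using assms unfolding ext_def by auto

lemma ext_snoc_gt: assumes "w \<noteq> []" "sorted w" "last w < x" "b < x"
  shows "ext (w @ [x]) b \<longleftrightarrow> last w \<le> b"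
proof
  assume "ext (w @ [x]) b"
  moreover have "last w \<in> set (w @ [x])" using assms(1) by simp
  ultimately show "last w \<le> b" using assms(3) unfolding ext_def by force
next
  assume lb: "last w \<le> b"
  show "ext (w @ [x]) b" unfolding ext_def
  proof
    fix y assume "y \<in> set (w @ [x])"
    then have "y \<in> set w \<or> y = x" by auto
    then show "b < y \<longrightarrow> y = last (w @ [x])"
      using sorted_le_last[OF assms(2) assms(1)] lb by force
  qed
qed

lemma E_rec: assumes "p \<ge> 1"
  shows "((u::'a::comm_ring_1) - 1)^2 * (Ef u (Suc p) - Ef u p) = of_nat (Cat p) * u^(Suc p) - Qf u p - (u - 1) * (Yf u p + Qf u p)"
proof -
  have step: "(\<Sum>x=last w..p. \<Sum>b\<in>{b. b < last (w@[x]) \<and> ext (w@[x]) b}. u ^ b)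
      = (\<Sum>b\<in>{b. b < last w \<and> ext w b}. u ^ b) + (\<Sum>x\<in>{last w..<last w + (Suc p - last w)}. \<Sum>b\<in>{last w..<x}. u^b)"
    if w: "w \<in> WI p" for w
  proof -
    have lp: "last w \<le> p" using WI_last_lt[OF w assms] by simp
    have ne: "w \<noteq> []" using WI_ne[OF w assms] .
    have so: "sorted w" using WI_sorted[OF w] .
    have "{last w..p} = insert (last w) {Suc (last w)..p}" using lp by auto
    then have "(\<Sum>x=last w..p. \<Sum>b\<in>{b. b < last (w@[x]) \<and> ext (w@[x]) b}. u ^ b)
       = (\<Sum>b\<in>{b. b < last w \<and> ext (w@[last w]) b}. u ^ b) + (\<Sum>x=Suc (last w)..p. \<Sum>b\<in>{b. b < x \<and> ext (w@[x]) b}. u ^ b)"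
      by simp
    also have "\<dots> = (\<Sum>b\<in>{b. b < last w \<and> ext w b}. u ^ b) + (\<Sum>x=Suc (last w)..p. \<Sum>b\<in>{last w..<x}. u ^ b)"
    proof -
      have "{b. b < x \<and> ext (w@[x]) b} = {last w..<x}" if "x \<in> {Suc (last w)..p}" for x
        using ext_snoc_gt[OF ne so, of x] that by auto
      then show ?thesis using ext_snoc_eq[OF ne] by (intro arg_cong2[where f="(+)"] sum.cong) auto
    qed
    also have "(\<Sum>x=Suc (last w)..p. \<Sum>b\<in>{last w..<x}. u ^ b) = (\<Sum>x\<in>{last w..<last w + (Suc p - last w)}. \<Sum>b\<in>{last w..<x}. u^b)"
    proof -
      have "{last w..<last w + (Suc p - last w)} = insert (last w) {Suc (last w)..p}" using lp by auto
      then show ?thesis by simp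
    qed
    finally show ?thesis .
  qed
  have "Ef u (Suc p) = (\<Sum>w\<in>WI p. (\<Sum>b\<in>{b. b < last w \<and> ext w b}. u ^ b) + (\<Sum>x\<in>{last w..<last w + (Suc p - last w)}. \<Sum>b\<in>{last w..<x}. u^b))"
    unfolding Ef_def sum_WI_Suc[OF assms] using step by (rule sum.cong[OF refl])
  then have "Ef u (Suc p) - Ef u p = (\<Sum>w\<in>WI p. (\<Sum>x\<in>{last w..<last w + (Suc p - last w)}. \<Sum>b\<in>{last w..<x}. u^b))"
    unfolding Ef_def by (simp add: sum.distrib)
  then have "(u - 1)^2 * (Ef u (Suc p) - Ef u p) = (\<Sum>w\<in>WI p. (u - 1)^2 * (\<Sum>x\<in>{last w..<last w + (Suc p - last w)}. \<Sum>b\<in>{last w..<x}. u^b))"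
    by (simp only: sum_distrib_left)
  also have "\<dots> = (\<Sum>w\<in>WI p. u^(Suc p) - u ^ last w - of_nat (Suc p - last w) * (u-1) * u^last w)"
  proof (rule sum.cong[OF refl])
    fix w assume w: "w \<in> WI p"
    have lp: "last w \<le> p" using WI_last_lt[OF w assms] by simp
    show "(u - 1)^2 * (\<Sum>x\<in>{last w..<last w + (Suc p - last w)}. \<Sum>b\<in>{last w..<x}. u^b) = u^(Suc p) - u ^ last w - of_nat (Suc p - last w) * (u-1) * u^last w"
      unfolding geo3 using lp by simp
  qed
  also have "\<dots> = (\<Sum>w\<in>WI p. u^(Suc p) - u ^ last w - (u - 1) * (of_nat (p - last w) * u ^ last w + u ^ last w))"
  proof (rule sum.cong[OF refl])
    fix w assume w: "w \<in> WI p"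
    have lp: "last w \<le> p" using WI_last_lt[OF w assms] by simp
    then show "u^(Suc p) - u ^ last w - of_nat (Suc p - last w) * (u-1) * u^last w = u^(Suc p) - u ^ last w - (u - 1) * (of_nat (p - last w) * u ^ last w + u ^ last w)"
      by (simp add: Suc_diff_le algebra_simps)
  qed
  also have "\<dots> = of_nat (Cat p) * u^(Suc p) - Qf u p - (u - 1) * (Yf u p + Qf u p)"
    unfolding Qf_def Cat_def Yf_def by (simp add: sum_subtractf sum.distrib sum_distrib_left distrib_left)
  finally show ?thesis .
qed

lemma base1: "Cat 0 = 1" "Cat 1 = 1" "Qf u 1 = 1" "Yf u 1 = 1" "Ef u 1 = 0"
  by (simp_all add: Cat_def Qf_def Yf_def Ef_def WI_0 WI_1)


definition SD :: "nat \<Rightarrow> nat \<Rightarrow> nat list set" where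
  "SD b l = {D. length D = l \<and> sorted_wrt (>) D \<and> set D \<subseteq> {..<b}}"

lemma sorted_wrt_gt_rev: "sorted_wrt (>) D \<longleftrightarrow> sorted_wrt (<) (rev D)"
  by (simp add: sorted_wrt_rev)

lemma sorted_gt_distinct: assumes "sorted_wrt (>) (D::nat list)" shows "distinct D"
proof -
  have "sorted_wrt (<) (rev D)" using assms by (rule iffD1[OF sorted_wrt_gt_rev])
  then have "sorted (rev D) \<and> distinct (rev D)" by (rule iffD1[OF strict_sorted_iff])
  then show ?thesis by simp
qed

lemma card_SD: "card (SD b l) = b choose l"
proof -
  have inj: "inj_on set (SD b l)"
  proof (rule inj_onI)
    fix D1 D2 assume d1: "D1 \<in> SD b l" and d2: "D2 \<in> SD b l" and e: "set D1 = set D2"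
    have s1: "sorted_wrt (<) (rev D1)" using d1 unfolding SD_def by (simp add: sorted_wrt_rev)
    have s2: "sorted_wrt (<) (rev D2)" using d2 unfolding SD_def by (simp add: sorted_wrt_rev)
    have a1: "sorted (rev D1) \<and> distinct (rev D1)" using s1 by (rule iffD1[OF strict_sorted_iff])
    have a2: "sorted (rev D2) \<and> distinct (rev D2)" using s2 by (rule iffD1[OF strict_sorted_iff])
    have "set (rev D1) = set (rev D2)" using e by simp
    then have "rev D1 = rev D2" using sorted_distinct_set_unique[OF conjunct1[OF a1] conjunct2[OF a1] conjunct1[OF a2] conjunct2[OF a2]] by simp
    then show "D1 = D2" by simp
  qed
  have img: "set ` SD b l = {S. S \<subseteq> {..<b} \<and> card S = l}"
  proof (intro set_eqI iffI)
    fix S assume "S \<in> set ` SD b l"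
    then obtain D where D: "D \<in> SD b l" "S = set D" by auto
    then have "distinct D" unfolding SD_def using sorted_gt_distinct by auto
    then show "S \<in> {S. S \<subseteq> {..<b} \<and> card S = l}" using D unfolding SD_def by (auto simp: distinct_card)
  next
    fix S assume S: "S \<in> {S. S \<subseteq> {..<b} \<and> card S = l}"
    then have fin: "finite S" using finite_subset by blast
    let ?D = "rev (sorted_list_of_set S)"
    have m: "?D \<in> SD b l" unfolding SD_def sorted_wrt_gt_rev using S fin
      by (simp add: strict_sorted_list_of_set)
    have e: "S = set ?D" using fin by simp
    show "S \<in> set ` SD b l" by (rule image_eqI[where f=set, OF e m])
  qed
  have "card (SD b l) = card {S. S \<subseteq> {..<b} \<and> card S = l}"
    using bij_betw_same_card[OF bij_betw_imageI[OF inj img]] .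
  also have "\<dots> = b choose l" using n_subsets[of "{..<b}" l] by simp
  finally show ?thesis .
qed

definition tailok :: "nat \<Rightarrow> nat \<Rightarrow> bool \<Rightarrow> nat list \<Rightarrow> bool" where
  "tailok v b e r \<longleftrightarrow> (\<exists>k D. r = replicate k v @ D \<and> (0 < k \<longrightarrow> e) \<and> sorted_wrt (>) D \<and> (\<forall>d\<in>set D. d < b))"

definition TL :: "nat \<Rightarrow> nat \<Rightarrow> bool \<Rightarrow> nat \<Rightarrow> nat list set" where
  "TL v b e s = {r. length r = s \<and> tailok v b e r}"

lemma takeWhile_rep: "(\<forall>d\<in>set D. d \<noteq> v) \<Longrightarrow> takeWhile (\<lambda>x. x = v) (replicate k v @ D) = replicate k v"
proof (induction k)
  case 0 then show ?case by (cases D) auto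
next
  case (Suc k) then show ?case by simp
qed

lemma TL_eq: assumes "b < v"
  shows "TL v b e s = (\<Union>k\<in>(if e then {0..s} else {0}). (\<lambda>D. replicate k v @ D) ` SD b (s - k))"
proof (intro set_eqI iffI)
  fix r assume "r \<in> TL v b e s"
  then obtain k D where h: "length r = s" "r = replicate k v @ D" "0 < k \<longrightarrow> e" "sorted_wrt (>) D" "\<forall>d\<in>set D. d < b"
    unfolding TL_def tailok_def by blast
  have "k \<in> (if e then {0..s} else {0})" using h by auto
  moreover have "D \<in> SD b (s - k)" using h unfolding SD_def by auto
  ultimately show "r \<in> (\<Union>k\<in>(if e then {0..s} else {0}). (\<lambda>D. replicate k v @ D) ` SD b (s - k))"
    using h(2) by blast
next
  fix r assume "r \<in> (\<Union>k\<in>(if e then {0..s} else {0}). (\<lambda>D. replicate k v @ D) ` SD b (s - k))"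
  then obtain k D where h: "k \<in> (if e then {0..s} else {0})" "D \<in> SD b (s - k)" "r = replicate k v @ D" by blast
  have "k \<le> s" "0 < k \<longrightarrow> e" using h(1) by (auto split: if_splits)
  then show "r \<in> TL v b e s" using h(2,3) unfolding TL_def tailok_def SD_def by auto
qed

lemma card_TL: assumes "b < v"
  shows "card (TL v b e s) = (\<Sum>k\<in>(if e then {0..s} else {0}). b choose (s - k))"
proof -
  let ?K = "if e then {0..s} else {0::nat}"
  have fin: "finite ?K" by simp
  have finSD: "finite (SD b l)" for l
  proof -
    have "SD b l \<subseteq> {xs. set xs \<subseteq> {..<b} \<and> length xs = l}" unfolding SD_def by auto
    then show ?thesis using finite_lists_length_eq[of "{..<b}" l] finite_subset by blast
  qed
  have notv: "\<forall>d\<in>set D. d \<noteq> v" if "D \<in> SD b l" for D l using that assms unfolding SD_def by auto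
  have disj: "((\<lambda>D. replicate k1 v @ D) ` SD b (s - k1)) \<inter> ((\<lambda>D. replicate k2 v @ D) ` SD b (s - k2)) = {}"
    if "k1 \<noteq> k2" for k1 k2
  proof (rule ccontr)
    assume "\<not> ?thesis"
    then obtain D1 D2 where h: "D1 \<in> SD b (s - k1)" "D2 \<in> SD b (s - k2)" "replicate k1 v @ D1 = replicate k2 v @ D2"
      by blast
    have "replicate k1 v = takeWhile (\<lambda>x. x = v) (replicate k1 v @ D1)" using takeWhile_rep[OF notv[OF h(1)]] by simp
    also have "\<dots> = takeWhile (\<lambda>x. x = v) (replicate k2 v @ D2)" using h(3) by simp
    also have "\<dots> = replicate k2 v" using takeWhile_rep[OF notv[OF h(2)]] by simp
    finally have "replicate k1 v = replicate k2 v" .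
    then have "length (replicate k1 v) = length (replicate k2 v)" by simp
    then show False using that by simp
  qed
  have inj: "inj_on (\<lambda>D. replicate k v @ D) (SD b l)" for k l by (rule inj_onI) simp
  have "card (TL v b e s) = (\<Sum>k\<in>?K. card ((\<lambda>D. replicate k v @ D) ` SD b (s - k)))"
    unfolding TL_eq[OF assms] by (rule card_UN_disjoint[OF fin]) (auto simp: finSD disj)
  also have "\<dots> = (\<Sum>k\<in>?K. b choose (s - k))"
    by (rule sum.cong[OF refl]) (simp add: card_image[OF inj] card_SD)
  finally show ?thesis .
qed


lemma nth_split: "(w @ b # r) ! t = (if t < length w then w!t else if t = length w then b else r!(t - Suc (length w)))"
  by (simp add: nth_append nth_Cons')

lemma w_le_last: "sorted w \<Longrightarrow> i < length w \<Longrightarrow> w!i \<le> last w"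
  using sorted_le_last[of w "w!i"] by force

lemma good_split_1:
  assumes so: "sorted w" and ne: "w \<noteq> []" and bv: "b < last w"
    and tk: "r = replicate k (last w) @ D" and ke: "0 < k \<longrightarrow> ext w b"
    and sD: "sorted_wrt (>) D" and Db: "\<forall>d\<in>set D. d < b"
  shows "good (w @ b # r)"
  unfolding good_def
proof (intro allI impI)
  fix i j k' assume ij: "i < j" and jk: "j < k'" and kl: "k' < length (w @ b # r)"
    and lt: "(w @ b # r) ! j < (w @ b # r) ! i"
  let ?a = "w @ b # r" and ?p = "length w" and ?v = "last w"
  have rnth: "r!t = (if t < k then ?v else D!(t-k))" if "t < length r" for t
    using that tk by (auto simp: nth_append)
  have rle: "r!t \<le> ?v" if "t < length r" for t
  proof (cases "t < k")
    case True then show ?thesis using rnth[OF that] by simp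
  next
    case False
    then have "t - k < length D" using that tk by auto
    then have "D!(t-k) \<in> set D" by simp
    then show ?thesis using rnth[OF that] False Db bv by force
  qed
  have wle: "w!t \<le> ?v" if "t < ?p" for t using w_le_last[OF so that] .
  show "?a ! k' < ?a ! j \<or> ?a ! k' = ?a ! i"
  proof (cases "j < ?p")
    case True
    then have "?a!i = w!i" "?a!j = w!j" using ij by (simp_all add: nth_split)
    moreover have "w!i \<le> w!j" using sorted_nth_mono[OF so] ij True by simp
    ultimately show ?thesis using lt by simp
  next
    case False
    show ?thesis
    proof (cases "j = ?p")
      case True
      have aj: "?a!j = b" using True by (simp add: nth_split)
      define t where "t = k' - Suc ?p"
      have tl: "t < length r" using kl jk True unfolding t_def by simp
      have ak: "?a!k' = r!t" using jk True unfolding t_def by (simp add: nth_split)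
      show ?thesis
      proof (cases "t < k")
        case True
        then have e: "ext w b" using ke by simp
        have ip: "i < ?p" using ij \<open>j = ?p\<close> by simp
        then have ai': "?a!i = w!i" by (simp add: nth_split)
        have "w!i \<in> set w" using ip by simp
        then have "w!i = ?v" using e lt aj ai' unfolding ext_def by simp
        then show ?thesis using ak rnth[OF tl] True ai' by simp
      next
        case False
        then have "t - k < length D" using tl tk by auto
        then have "D!(t-k) \<in> set D" by simp
        then have "r!t < b" using rnth[OF tl] False Db by simp
        then show ?thesis using ak aj by simp
      qed
    next
      case False
      then have jp: "j > ?p" using \<open>\<not> j < ?p\<close> by simp
      define tj where "tj = j - Suc ?p"
      have tjl: "tj < length r" using kl jk jp unfolding tj_def by simp
      have aj: "?a!j = r!tj" using jp unfolding tj_def by (simp add: nth_split)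
      show ?thesis
      proof (cases "tj < k")
        case True
        then have ajv: "?a!j = ?v" using aj rnth[OF tjl] by simp
        have "?a!i \<le> ?v"
        proof (cases "i < ?p")
          case True then show ?thesis using wle by (simp add: nth_split)
        next
          case False
          show ?thesis
          proof (cases "i = ?p")
            case True then show ?thesis using bv by (simp add: nth_split)
          next
            case False
            then have "i > ?p" using \<open>\<not> i < ?p\<close> by simp
            then show ?thesis using rle[of "i - Suc ?p"] kl ij jk by (simp add: nth_split)
          qed
        qed
        then show ?thesis using lt ajv by simp
      next
        case False
        define tk' where "tk' = k' - Suc ?p"
        have tkl: "tk' < length r" using kl jk jp unfolding tk'_def by simp
        have ak: "?a!k' = r!tk'" using jp jk unfolding tk'_def by (simp add: nth_split)
        have lens: "tj - k < tk' - k" "tk' - k < length D" using False jk jp tkl tk unfolding tj_def tk'_def by auto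
        have "D!(tk' - k) < D!(tj - k)" using sorted_wrt_nth_less[OF sD lens] by simp
        moreover have "r!tk' = D!(tk' - k)" "r!tj = D!(tj - k)"
          using rnth[OF tkl] rnth[OF tjl] False lens unfolding tj_def tk'_def by auto
        ultimately show ?thesis using ak aj by simp
      qed
    qed
  qed
qed

lemma good_split_2:
  assumes so: "sorted w" and ne: "w \<noteq> []" and bv: "b < last w"
    and g: "good (w @ b # r)"
  shows "tailok (last w) b (ext w b) r"
proof -
  let ?a = "w @ b # r" and ?p = "length w" and ?v = "last w"
  have G: "?a!k < ?a!j \<or> ?a!k = ?a!i" if "i < j" "j < k" "k < length ?a" "?a!j < ?a!i" for i j k
    using g that unfolding good_def by blast
  have pv: "?a!(?p - 1) = ?v" using ne by (simp add: nth_split last_conv_nth)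
  have pb: "?a!?p = b" by (simp add: nth_split)
  have ar: "?a!(Suc ?p + t) = r!t" for t by (simp add: nth_split)
  have C1: "r!t < b \<or> r!t = ?v" if "t < length r" for t
  proof -
    have "?a!(Suc ?p + t) < ?a!?p \<or> ?a!(Suc ?p + t) = ?a!(?p - 1)"
      using G[of "?p - 1" "?p" "Suc ?p + t"] ne that pv pb bv by simp
    then show ?thesis using ar pv pb by simp
  qed
  have C2: "r!t < r!s" if "s < t" "t < length r" "r!s < b" for s t
  proof -
    have "?a!(Suc ?p + t) < ?a!(Suc ?p + s) \<or> ?a!(Suc ?p + t) = ?a!?p"
      using G[of "?p" "Suc ?p + s" "Suc ?p + t"] that ar pb by simp
    then have "r!t < r!s \<or> r!t = b" using ar pb by simp
    moreover have "r!t \<noteq> b" using C1[OF that(2)] bv by auto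
    ultimately show ?thesis by simp
  qed
  have C3: "ext w b" if "t < length r" "r!t = ?v" for t
    unfolding ext_def
  proof (intro ballI impI)
    fix x assume x: "x \<in> set w" "b < x"
    then obtain i where i: "i < ?p" "w!i = x" by (auto simp: in_set_conv_nth)
    have ai: "?a!i = x" using i by (simp add: nth_split)
    have "?a!(Suc ?p + t) < ?a!?p \<or> ?a!(Suc ?p + t) = ?a!i"
      using G[of i "?p" "Suc ?p + t"] i that pb ai x by simp
    then show "x = last w" using ar pb ai that bv by auto
  qed
  define k0 where "k0 = length (takeWhile (\<lambda>x. x = ?v) r)"
  define D where "D = dropWhile (\<lambda>x. x = ?v) r"
  have tw: "takeWhile (\<lambda>x. x = ?v) r = replicate k0 ?v"
    unfolding k0_def by (rule replicate_length_same[symmetric]) (auto dest: set_takeWhileD)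
  have rsplit: "r = replicate k0 ?v @ D"
    unfolding D_def tw[symmetric] by simp
  have Dnth: "D!m = r!(k0 + m)" if "m < length D" for m
    using that unfolding rsplit by (simp add: nth_append)
  have lD: "length r = k0 + length D" unfolding rsplit by simp
  have D0: "D!0 < b" if "D \<noteq> []"
  proof -
    have "hd D \<noteq> ?v" using hd_dropWhile[of "\<lambda>x. x = ?v" r] that unfolding D_def by simp
    then have "r!k0 \<noteq> ?v" using Dnth[of 0] that by (simp add: hd_conv_nth)
    then show ?thesis using C1[of k0] lD that Dnth[of 0] by simp
  qed
  have Db: "D!m < b" if "m < length D" for m
  proof (cases m)
    case 0 then show ?thesis using D0 that by auto
  next
    case (Suc m')
    have ne': "D \<noteq> []" using that by auto
    have rk: "r!k0 < b" using D0[OF ne'] Dnth[of 0] ne' by simp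
    have "r!(k0 + m) < r!k0" using C2[of k0 "k0 + m"] Suc that lD rk by auto
    then show ?thesis using rk Dnth[OF that] by simp
  qed
  have sD: "sorted_wrt (>) D"
    unfolding sorted_wrt_iff_nth_less
  proof (intro allI impI)
    fix i j assume "i < j" "j < length D"
    then show "D!j < D!i" using C2[of "k0 + i" "k0 + j"] Db[of i] Dnth lD by auto
  qed
  have kext: "0 < k0 \<longrightarrow> ext w b"
  proof
    assume "0 < k0"
    then have "r!0 = ?v" unfolding rsplit by (simp add: nth_append)
    then show "ext w b" using C3[of 0] \<open>0 < k0\<close> lD by simp
  qed
  have "\<forall>d\<in>set D. d < b" using Db by (auto simp: in_set_conv_nth)
  then show ?thesis unfolding tailok_def using rsplit kext sD by blast
qed


definition Av :: "nat \<Rightarrow> nat list set" where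
  "Av n = {a. length a = n \<and> inv_seq a \<and> good a}"

lemma I_count_Av: "I_count n = card (Av n)"
  unfolding I_count_def Av_def by (simp only: avoid_iff_good)

definition WIr :: "nat \<Rightarrow> nat list set" where
  "WIr n = {w. 1 \<le> length w \<and> length w < n \<and> inv_seq w \<and> sorted w}"

definition DOM :: "nat \<Rightarrow> (nat list \<times> nat \<times> nat list) set" where
  "DOM n = (SIGMA w:WIr n. SIGMA b:{..<last w}. TL (last w) b (ext w b) (n - length w - 1))"

definition FF :: "nat list \<times> nat \<times> nat list \<Rightarrow> nat list" where
  "FF = (\<lambda>(w,b,r). w @ b # r)"

lemma sorted_good: "sorted a \<Longrightarrow> good a"
  unfolding good_def using sorted_nth_mono by (metis less_imp_le_nat not_less order.strict_trans)

lemma finite_SD: "finite (SD b l)"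
proof -
  have "SD b l \<subseteq> {xs. set xs \<subseteq> {..<b} \<and> length xs = l}" unfolding SD_def by auto
  then show ?thesis using finite_lists_length_eq[of "{..<b}" l] finite_subset by blast
qed

lemma finite_TL: "b < v \<Longrightarrow> finite (TL v b e s)"
  unfolding TL_eq by (auto simp: finite_SD)

lemma finite_WIr: "finite (WIr n)"
proof -
  have "WIr n \<subseteq> {xs. set xs \<subseteq> {..<n} \<and> length xs \<le> n}"
    unfolding WIr_def using inv_seq_set by fastforce
  then show ?thesis using finite_lists_length_le[of "{..<n}" n] finite_subset by blast
qed

lemma finite_DOM: "finite (DOM n)"
  unfolding DOM_def by (intro finite_SigmaI finite_WIr finite_TL) auto

lemma desc_len:
  assumes s1: "sorted w" and n1: "w \<noteq> []" and b1: "b < last w"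
    and s2: "sorted w'" and n2: "w' \<noteq> []" and b2: "b' < last w'"
    and e: "w @ b # r = w' @ b' # r'" and l: "length w < length w'"
  shows False
proof -
  let ?p = "length w"
  have "(w' @ b' # r') ! ?p = w'!?p" using l by (simp add: nth_append)
  moreover have "(w @ b # r) ! ?p = b" by simp
  ultimately have x1: "w'!?p = b" using e by simp
  have pl: "?p - 1 < length w'" using l by linarith
  have "(w' @ b' # r') ! (?p - 1) = w'!(?p - 1)" using pl by (simp add: nth_append)
  moreover have "(w @ b # r) ! (?p - 1) = last w" using n1 by (simp add: nth_append last_conv_nth)
  ultimately have x2: "w'!(?p - 1) = last w" using e by simp
  have "w'!(?p - 1) \<le> w'!?p" using sorted_nth_mono[OF s2, of "?p - 1" ?p] l by simp
  then show False using x1 x2 b1 by simp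
qed

lemma inj_FF: "inj_on FF (DOM n)"
proof (rule inj_onI)
  fix x y assume x: "x \<in> DOM n" and y: "y \<in> DOM n" and e: "FF x = FF y"
  obtain w b r where xd: "x = (w,b,r)" by (cases x) auto
  obtain w' b' r' where yd: "y = (w',b',r')" by (cases y) auto
  have hx: "sorted w" "w \<noteq> []" "b < last w" using x unfolding xd DOM_def WIr_def by auto
  have hy: "sorted w'" "w' \<noteq> []" "b' < last w'" using y unfolding yd DOM_def WIr_def by auto
  have e': "w @ b # r = w' @ b' # r'" using e unfolding xd yd FF_def by simp
  have "length w = length w'"
    using desc_len[OF hx hy e'] desc_len[OF hy hx e'[symmetric]] by (meson linorder_neqE_nat)
  then show "x = y" using e' unfolding xd yd by simp
qed

lemma FF_not_sorted: "x \<in> DOM n \<Longrightarrow> \<not> sorted (FF x)"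
proof -
  assume x: "x \<in> DOM n"
  obtain w b r where xd: "x = (w,b,r)" by (cases x) auto
  have hx: "w \<noteq> []" "b < last w" using x unfolding xd DOM_def WIr_def by auto
  have lw: "last w \<in> set w" using hx by simp
  have "\<not> sorted (w @ b # r)"
  proof
    assume "sorted (w @ b # r)"
    then have "\<forall>x\<in>set w. x \<le> b" by (simp add: sorted_append)
    then have "last w \<le> b" using lw by blast
    then show False using hx by simp
  qed
  then show ?thesis unfolding xd FF_def by simp
qed

lemma FF_in_Av: assumes x: "x \<in> DOM n" shows "FF x \<in> Av n"
proof -
  obtain w b r where xd: "x = (w,b,r)" by (cases x) auto
  have hw: "1 \<le> length w" "length w < n" "inv_seq w" "sorted w" "b < last w"
    and tl: "length r = n - length w - 1" "tailok (last w) b (ext w b) r"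
    using x unfolding xd DOM_def WIr_def TL_def by auto
  have ne: "w \<noteq> []" using hw by auto
  obtain k D where kD: "r = replicate k (last w) @ D" "0 < k \<longrightarrow> ext w b" "sorted_wrt (>) D" "\<forall>d\<in>set D. d < b"
    using tl(2) unfolding tailok_def by blast
  have g: "good (w @ b # r)" using good_split_1[OF hw(4) ne hw(5) kD] .
  have lv: "last w < length w" using WI_last_lt[of w "length w"] hw unfolding WI_def by auto
  have rle: "r!t \<le> last w" if "t < length r" for t
  proof (cases "t < k")
    case True then show ?thesis using kD(1) that by (simp add: nth_append)
  next
    case False
    then have "t - k < length D" using that kD(1) by auto
    then have "D!(t-k) \<in> set D" by simp
    then have "D!(t-k) < b" using kD(4) by blast
    moreover have "r!t = D!(t-k)" using kD(1) False by (simp add: nth_append)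
    ultimately show ?thesis using hw(5) by simp
  qed
  have inv: "inv_seq (w @ b # r)"
    unfolding inv_seq_def
  proof (intro allI impI)
    fix i assume i: "i < length (w @ b # r)"
    show "(w @ b # r) ! i < Suc i"
    proof (cases "i < length w")
      case True then show ?thesis using hw(3) unfolding inv_seq_def by (simp add: nth_split)
    next
      case False
      show ?thesis
      proof (cases "i = length w")
        case True then show ?thesis using hw(5) lv by (simp add: nth_split)
      next
        case False
        then have "i - Suc (length w) < length r" using \<open>\<not> i < length w\<close> i by auto
        then show ?thesis using rle[of "i - Suc (length w)"] lv False \<open>\<not> i < length w\<close> by (simp add: nth_split)
      qed
    qed
  qed
  show ?thesis unfolding xd FF_def Av_def using g inv tl(1) hw(1,2) by auto
qed

lemma Av_sub: assumes a: "a \<in> Av n" and ns: "\<not> sorted a"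
  shows "a \<in> FF ` DOM n"
proof -
  have al: "length a = n" and ai: "inv_seq a" and ag: "good a" using a unfolding Av_def by auto
  obtain i0 where "Suc i0 < length a" "a!(Suc i0) < a!i0"
    using ns unfolding sorted_iff_nth_Suc by (auto simp: not_le)
  define q where "q = (LEAST i. Suc i < length a \<and> a!(Suc i) < a!i)"
  have q: "Suc q < length a" "a!(Suc q) < a!q"
    using LeastI[of "\<lambda>i. Suc i < length a \<and> a!(Suc i) < a!i", OF conjI[OF \<open>Suc i0 < length a\<close> \<open>a!(Suc i0) < a!i0\<close>]]
    unfolding q_def by auto
  have qmin: "a!i \<le> a!(Suc i)" if "i < q" for i
  proof (rule ccontr)
    assume "\<not> a!i \<le> a!(Suc i)"
    then have "Suc i < length a \<and> a!(Suc i) < a!i" using that q by auto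
    then have "q \<le> i" unfolding q_def by (rule Least_le)
    then show False using that by simp
  qed
  define p where "p = Suc q"
  define w where "w = take p a"
  define b where "b = a!p"
  define r where "r = drop (Suc p) a"
  have asplit: "a = w @ b # r" unfolding w_def b_def r_def using q(1) p_def id_take_nth_drop by blast
  have lw: "length w = p" using q(1) unfolding w_def p_def by simp
  have ne: "w \<noteq> []" using lw p_def by auto
  have tne: "take (Suc q) a \<noteq> []" using q(1) by (cases a) auto
  have lastw: "last w = a!q" unfolding w_def p_def using q(1) tne by (simp add: last_conv_nth min_def)
  have bv: "b < last w" using q(2) unfolding b_def lastw p_def .
  have sw: "sorted w" unfolding sorted_iff_nth_Suc
  proof (intro allI impI)
    fix i assume "Suc i < length w"
    then show "w!i \<le> w!(Suc i)" using qmin[of i] lw unfolding w_def p_def by simp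
  qed
  have iw: "inv_seq w" using ai unfolding inv_seq_def w_def by simp
  have gw: "good (w @ b # r)" using ag asplit by simp
  have tl: "tailok (last w) b (ext w b) r" using good_split_2[OF sw ne bv gw] .
  have lr: "length r = n - length w - 1" unfolding r_def lw using al by simp
  have "(w, b, r) \<in> DOM n"
    unfolding DOM_def WIr_def TL_def using lw p_def q(1) al iw sw bv tl lr by auto
  moreover have "FF (w, b, r) = a" unfolding FF_def using asplit by simp
  ultimately show ?thesis by force
qed

lemma card_Av: assumes "n \<ge> 1"
  shows "card (Av n) = card (WI n) + (\<Sum>w\<in>WIr n. \<Sum>b<last w. card (TL (last w) b (ext w b) (n - length w - 1)))"
proof -
  have WIsub: "WI n \<subseteq> Av n" unfolding WI_def Av_def using sorted_good by auto
  have eq: "Av n = WI n \<union> FF ` DOM n"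
  proof
    show "Av n \<subseteq> WI n \<union> FF ` DOM n"
    proof
      fix a assume a: "a \<in> Av n"
      show "a \<in> WI n \<union> FF ` DOM n"
      proof (cases "sorted a")
        case True then show ?thesis using a unfolding Av_def WI_def by auto
      next
        case False then show ?thesis using Av_sub[OF a] by auto
      qed
    qed
    show "WI n \<union> FF ` DOM n \<subseteq> Av n" using WIsub FF_in_Av by auto
  qed
  have disj: "WI n \<inter> FF ` DOM n = {}"
    using FF_not_sorted unfolding WI_def by auto
  have "card (Av n) = card (WI n) + card (FF ` DOM n)"
    unfolding eq by (rule card_Un_disjoint[OF finite_WI finite_imageI[OF finite_DOM] disj])
  also have "card (FF ` DOM n) = card (DOM n)" by (rule card_image[OF inj_FF])
  also have "card (DOM n) = (\<Sum>w\<in>WIr n. card (SIGMA b:{..<last w}. TL (last w) b (ext w b) (n - length w - 1)))"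
    unfolding DOM_def by (rule card_SigmaI) (auto simp: finite_WIr finite_TL)
  also have "\<dots> = (\<Sum>w\<in>WIr n. \<Sum>b<last w. card (TL (last w) b (ext w b) (n - length w - 1)))"
    by (rule sum.cong[OF refl], rule card_SigmaI) (auto simp: finite_TL)
  finally show ?thesis .
qed


lemma WIr_UN: "WIr n = (\<Union>p\<in>{1..<n}. WI p)"
  unfolding WIr_def WI_def by auto

lemma WIr_sum: "sum f (WIr n) = (\<Sum>p\<in>{1..<n}. sum f (WI p))"
  unfolding WIr_UN
  apply (rule sum.UNION_disjoint)
    apply simp
   apply (simp add: finite_WI)
  apply (auto simp: WI_def)
  done

lemma sum_choose_lt: "(\<Sum>b<v. b choose s) = v choose (Suc s)"
proof (cases v)
  case 0 then show ?thesis by simp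
next
  case (Suc v')
  then have "{..<v} = {..v'}" by auto
  then show ?thesis using sum_choose_upper[where n=v' and m=s] Suc by simp
qed

lemma card_TL': assumes "b < v"
  shows "card (TL v b e s) = (b choose s) + (if e then (\<Sum>l<s. b choose l) else 0)"
proof (cases e)
  case False then show ?thesis using card_TL[OF assms] by simp
next
  case True
  have "(\<Sum>k\<in>{0..s}. b choose (s - k)) = (b choose s) + (\<Sum>k\<in>{Suc 0..s}. b choose (s - k))"
    by (simp add: sum.atLeast_Suc_atMost)
  also have "(\<Sum>k\<in>{Suc 0..s}. b choose (s - k)) = (\<Sum>k\<in>{Suc 0..s}. b choose (k - 1))"
    by (subst sum.atLeastAtMost_rev) (rule sum.cong, auto)
  also have "\<dots> = (\<Sum>l<s. b choose l)" by (simp add: sum.atLeast1_atMost_eq)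
  finally show ?thesis using card_TL[OF assms] True by simp
qed

lemma card_Av_formula: assumes n: "n \<ge> 1"
  shows "card (Av n) = (\<Sum>p\<in>{1..n}. \<Sum>w\<in>WI p. last w choose (n - p))
    + (\<Sum>p\<in>{1..<n}. \<Sum>w\<in>WI p. \<Sum>b\<in>{b. b < last w \<and> ext w b}. \<Sum>l<n - p - 1. b choose l)"
proof -
  have inner: "(\<Sum>b<last w. card (TL (last w) b (ext w b) (n - length w - 1)))
     = (last w choose (n - length w)) + (\<Sum>b\<in>{b. b < last w \<and> ext w b}. \<Sum>l<n - length w - 1. b choose l)"
    if w: "w \<in> WIr n" for w
  proof -
    have "(\<Sum>b<last w. card (TL (last w) b (ext w b) (n - length w - 1)))
       = (\<Sum>b<last w. (b choose (n - length w - 1)) + (if ext w b then (\<Sum>l<n - length w - 1. b choose l) else 0))"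
      by (rule sum.cong[OF refl]) (simp add: card_TL')
    also have "\<dots> = (\<Sum>b<last w. b choose (n - length w - 1)) + (\<Sum>b<last w. if ext w b then (\<Sum>l<n - length w - 1. b choose l) else 0)"
      by (simp add: sum.distrib)
    also have "(\<Sum>b<last w. b choose (n - length w - 1)) = last w choose (n - length w)"
      using sum_choose_lt[where v="last w" and s="n - length w - 1"] w unfolding WIr_def by (simp add: Suc_diff_Suc)
    also have "(\<Sum>b<last w. if ext w b then (\<Sum>l<n - length w - 1. b choose l) else 0)
        = (\<Sum>b\<in>{b \<in> {..<last w}. ext w b}. \<Sum>l<n - length w - 1. b choose l)"
      by (rule sum.inter_filter[symmetric]) simp
    also have "{b \<in> {..<last w}. ext w b} = {b. b < last w \<and> ext w b}" by auto
    finally show ?thesis .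
  qed
  have "card (Av n) = card (WI n) + (\<Sum>w\<in>WIr n. (last w choose (n - length w)) + (\<Sum>b\<in>{b. b < last w \<and> ext w b}. \<Sum>l<n - length w - 1. b choose l))"
    unfolding card_Av[OF n] using inner by (simp cong: sum.cong)
  also have "\<dots> = card (WI n) + (\<Sum>p\<in>{1..<n}. \<Sum>w\<in>WI p. (last w choose (n - p)) + (\<Sum>b\<in>{b. b < last w \<and> ext w b}. \<Sum>l<n - p - 1. b choose l))"
    unfolding WIr_sum by (rule arg_cong[where f="\<lambda>t. card (WI n) + t"], rule sum.cong[OF refl], rule sum.cong[OF refl]) (simp add: WI_def)
  also have "card (WI n) = (\<Sum>w\<in>WI n. last w choose (n - n))" by simp
  also have "(\<Sum>w\<in>WI n. last w choose (n - n)) + (\<Sum>p\<in>{1..<n}. \<Sum>w\<in>WI p. (last w choose (n - p)) + (\<Sum>b\<in>{b. b < last w \<and> ext w b}. \<Sum>l<n - p - 1. b choose l))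
    = (\<Sum>p\<in>{1..n}. \<Sum>w\<in>WI p. last w choose (n - p))
    + (\<Sum>p\<in>{1..<n}. \<Sum>w\<in>WI p. \<Sum>b\<in>{b. b < last w \<and> ext w b}. \<Sum>l<n - p - 1. b choose l)"
  proof -
    have "{1..n} = insert n {1..<n}" using n by auto
    then have "(\<Sum>p\<in>{1..n}. \<Sum>w\<in>WI p. last w choose (n - p)) = (\<Sum>w\<in>WI n. last w choose (n - n)) + (\<Sum>p\<in>{1..<n}. \<Sum>w\<in>WI p. last w choose (n - p))"
      by simp
    then show ?thesis by (simp add: sum.distrib)
  qed
  finally show ?thesis .
qed




definition eqn :: "nat \<Rightarrow> real fps \<Rightarrow> real fps \<Rightarrow> bool" where
  "eqn n a b \<longleftrightarrow> (\<forall>i\<le>n. a $ i = b $ i)"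

lemma eqn_refl: "eqn n a a" unfolding eqn_def by simp
lemma eqn_sym: "eqn n a b \<Longrightarrow> eqn n b a" unfolding eqn_def by simp
lemma eqn_trans: "eqn n a b \<Longrightarrow> eqn n b c \<Longrightarrow> eqn n a c" unfolding eqn_def by simp
lemma eqn_add: "eqn n a a' \<Longrightarrow> eqn n b b' \<Longrightarrow> eqn n (a + b) (a' + b')" unfolding eqn_def by simp
lemma eqn_diff: "eqn n a a' \<Longrightarrow> eqn n b b' \<Longrightarrow> eqn n (a - b) (a' - b')" unfolding eqn_def by simp
lemma eqn_mult: assumes "eqn n a a'" "eqn n b b'" shows "eqn n (a * b) (a' * b')"
  unfolding eqn_def
proof (intro allI impI)
  fix i assume i: "i \<le> n"
  show "(a * b) $ i = (a' * b') $ i" unfolding fps_mult_nth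
    by (rule sum.cong[OF refl]) (use assms i in \<open>auto simp: eqn_def\<close>)
qed
lemma eqn_all: assumes h: "\<And>n. eqn n a b" shows "a = b"
  unfolding fps_eq_iff using h unfolding eqn_def by blast

definition PS :: "(nat \<Rightarrow> real fps) \<Rightarrow> nat \<Rightarrow> real fps" where
  "PS f M = (\<Sum>p\<in>{1..M}. fps_X^p * f p)"

definition LimS :: "(nat \<Rightarrow> real fps) \<Rightarrow> real fps" where
  "LimS f = Abs_fps (\<lambda>n. PS f n $ n)"

lemma PS_nth: assumes "i \<le> M" shows "PS f M $ i = (\<Sum>p\<in>{1..i}. f p $ (i - p))"
proof -
  have "PS f M $ i = (\<Sum>p\<in>{1..M}. (fps_X^p * f p) $ i)" unfolding PS_def fps_sum_nth ..
  also have "\<dots> = (\<Sum>p\<in>{1..i}. (fps_X^p * f p) $ i)"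
    by (rule sum.mono_neutral_right) (use assms in \<open>auto simp: fps_X_power_mult_nth\<close>)
  also have "\<dots> = (\<Sum>p\<in>{1..i}. f p $ (i - p))"
    by (rule sum.cong) (auto simp: fps_X_power_mult_nth)
  finally show ?thesis .
qed

lemma eqn_PS: "n \<le> M \<Longrightarrow> eqn n (PS f M) (LimS f)"
  unfolding eqn_def LimS_def by (simp add: PS_nth)

lemma PS_shift: "(\<Sum>p\<in>{1..M}. fps_X^(Suc p) * f (Suc p)) = PS f (Suc M) - fps_X * f 1"
proof -
  have "{1..Suc M} = insert 1 {Suc 1..Suc M}" by auto
  then have "PS f (Suc M) = fps_X * f 1 + (\<Sum>p\<in>{Suc 1..Suc M}. fps_X^p * f p)"
    unfolding PS_def by simp
  also have "(\<Sum>p\<in>{Suc 1..Suc M}. fps_X^p * f p) = (\<Sum>p\<in>{1..M}. fps_X^(Suc p) * f (Suc p))"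
    by (rule sum.shift_bounds_cl_Suc_ivl)
  finally show ?thesis by simp
qed

definition Cf :: "real fps" where "Cf = Abs_fps (\<lambda>p. real (Cat p))"

definition W :: "nat \<Rightarrow> real fps \<Rightarrow> real fps" where
  "W M t = (\<Sum>p\<in>{1..M}. of_nat (Cat p) * t^p)"

lemma eqn_W: assumes t0: "t $ 0 = 0" and nM: "n \<le> M" shows "eqn n (W M t) (fps_compose Cf t - 1)"
  unfolding eqn_def
proof (intro allI impI)
  fix i assume i: "i \<le> n"
  have z: "(t^p) $ i = 0" if "i < p" for p using startsby_zero_power_prefix[OF t0] that by blast
  have "W M t $ i = (\<Sum>p\<in>{1..M}. of_nat (Cat p) * (t^p) $ i)"
    unfolding W_def fps_sum_nth by (simp add: fps_of_nat[symmetric] del: fps_of_nat)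
  also have "\<dots> = (\<Sum>p\<in>{1..i}. of_nat (Cat p) * (t^p) $ i)"
    by (rule sum.mono_neutral_right) (use i nM z in auto)
  also have "(fps_compose Cf t - 1) $ i = (\<Sum>p\<in>{0..i}. of_nat (Cat p) * (t^p) $ i) - (if i = 0 then 1 else 0)"
    by (simp add: fps_compose_nth Cf_def)
  moreover have "(\<Sum>p\<in>{0..i}. of_nat (Cat p) * (t^p) $ i) = of_nat (Cat 0) * (t^0) $ i + (\<Sum>p\<in>{1..i}. of_nat (Cat p) * (t^p) $ i)"
    by (simp add: sum.atLeast_Suc_atMost)
  ultimately show "W M t $ i = (fps_compose Cf t - 1) $ i" using base1(1) by simp
qed




abbreviation XX :: "real fps" where "XX \<equiv> fps_X"

definition QQ :: "nat \<Rightarrow> real fps" where "QQ p = Qf (1 + XX) p"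
definition YY :: "nat \<Rightarrow> real fps" where "YY p = Yf (1 + XX) p"
definition EE :: "nat \<Rightarrow> real fps" where "EE p = Ef (1 + XX) p"
definition QM :: "nat \<Rightarrow> real fps" where "QM p = Qf (1 - XX) p"
definition yy :: "real fps" where "yy = XX * (1 + XX)"
definition wm :: "real fps" where "wm = XX * (1 - XX)"

lemma base2: "Qf u (Suc 0) = 1" "Yf u (Suc 0) = 1" "Ef u (Suc 0) = 0"
  using base1 by simp_all

lemma alg_Qp: "XX * Qs = K * ((1 + XX) * c) - Q \<Longrightarrow> XX * a * Qs = (1 + XX) * (K * (a * c)) - a * Q"
  by algebra
lemma alg_Qm: "(- XX) * Qs = K * ((1 - XX) * c) - Q \<Longrightarrow> XX * a * Qs = a * Q - (1 - XX) * (K * (a * c))"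
  by algebra
lemma alg_Yp: "XX^2 * Ys = K * ((1 + XX) * (1 + XX) * c) - Q - XX * (Y + 2 * Q) \<Longrightarrow>
   XX * (XX * a * Ys) = (1 + XX)^2 * (K * (a * c)) - a * Q - XX * (a * Y + 2 * (a * Q))"
  by algebra
lemma alg_Ep: "XX^2 * (Es - E) = K * ((1 + XX) * c) - Q - XX * (Y + Q) \<Longrightarrow>
   XX * (XX * a * Es) - XX^2 * (a * E) = (1 + XX) * (K * (a * c)) - a * Q - XX * (a * Y + a * Q)"
  by algebra

lemma Qp: assumes "p \<ge> 1"
  shows "XX^(Suc p) * QQ (Suc p) = (1 + XX) * (of_nat (Cat p) * yy^p) - XX^p * QQ p"
proof -
  have "XX * QQ (Suc p) = of_nat (Cat p) * ((1 + XX) * (1 + XX)^p) - QQ p"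
    using Q_rec[OF assms, of "1 + XX"] unfolding QQ_def by simp
  from alg_Qp[OF this, of "XX^p"] show ?thesis unfolding yy_def by (simp add: power_mult_distrib)
qed

lemma Qm: assumes "p \<ge> 1"
  shows "XX^(Suc p) * QM (Suc p) = XX^p * QM p - (1 - XX) * (of_nat (Cat p) * wm^p)"
proof -
  have "(- XX) * QM (Suc p) = of_nat (Cat p) * ((1 - XX) * (1 - XX)^p) - QM p"
    using Q_rec[OF assms, of "1 - XX"] unfolding QM_def by simp
  from alg_Qm[OF this, of "XX^p"] show ?thesis unfolding wm_def by (simp add: power_mult_distrib)
qed

lemma Yp: assumes "p \<ge> 1"
  shows "XX * (XX^(Suc p) * YY (Suc p)) = (1 + XX)^2 * (of_nat (Cat p) * yy^p) - XX^p * QQ p - XX * (XX^p * YY p + 2 * (XX^p * QQ p))"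
proof -
  have "XX^2 * YY (Suc p) = of_nat (Cat p) * ((1 + XX) * (1 + XX) * (1 + XX)^p) - QQ p - XX * (YY p + 2 * QQ p)"
    using Y_rec[OF assms, of "1 + XX"] unfolding QQ_def YY_def by (simp add: mult.assoc)
  from alg_Yp[OF this, of "XX^p"] show ?thesis unfolding yy_def by (simp add: power_mult_distrib)
qed

lemma Ep: assumes "p \<ge> 1"
  shows "XX * (XX^(Suc p) * EE (Suc p)) - XX^2 * (XX^p * EE p) = (1 + XX) * (of_nat (Cat p) * yy^p) - XX^p * QQ p - XX * (XX^p * YY p + XX^p * QQ p)"
proof -
  have "XX^2 * (EE (Suc p) - EE p) = of_nat (Cat p) * ((1 + XX) * (1 + XX)^p) - QQ p - XX * (YY p + QQ p)"
    using E_rec[OF assms, of "1 + XX"] unfolding QQ_def YY_def EE_def by simp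
  from alg_Ep[OF this, of "XX^p"] show ?thesis unfolding yy_def by (simp add: power_mult_distrib)
qed

lemma sumQp: "PS QQ (Suc M) - XX = (1 + XX) * W M yy - PS QQ M"
proof -
  have "(\<Sum>p\<in>{1..M}. XX^(Suc p) * QQ (Suc p)) = (\<Sum>p\<in>{1..M}. (1 + XX) * (of_nat (Cat p) * yy^p) - XX^p * QQ p)"
    by (rule sum.cong[OF refl], rule Qp) simp
  also have "\<dots> = (1 + XX) * W M yy - PS QQ M"
    by (simp add: sum_subtractf sum_distrib_left W_def PS_def)
  finally show ?thesis unfolding PS_shift by (simp add: QQ_def base2)
qed

lemma sumQm: "PS QM (Suc M) - XX = PS QM M - (1 - XX) * W M wm"
proof -
  have "(\<Sum>p\<in>{1..M}. XX^(Suc p) * QM (Suc p)) = (\<Sum>p\<in>{1..M}. XX^p * QM p - (1 - XX) * (of_nat (Cat p) * wm^p))"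
    by (rule sum.cong[OF refl], rule Qm) simp
  also have "\<dots> = PS QM M - (1 - XX) * W M wm"
    by (simp add: sum_subtractf sum_distrib_left W_def PS_def)
  finally show ?thesis unfolding PS_shift by (simp add: QM_def base2)
qed

lemma sumYp: "XX * (PS YY (Suc M) - XX) = (1 + XX)^2 * W M yy - PS QQ M - XX * (PS YY M + 2 * PS QQ M)"
proof -
  have "XX * (\<Sum>p\<in>{1..M}. XX^(Suc p) * YY (Suc p)) = (\<Sum>p\<in>{1..M}. XX * (XX^(Suc p) * YY (Suc p)))"
    by (simp add: sum_distrib_left)
  also have "\<dots> = (\<Sum>p\<in>{1..M}. (1 + XX)^2 * (of_nat (Cat p) * yy^p) - XX^p * QQ p - XX * (XX^p * YY p + 2 * (XX^p * QQ p)))"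
    by (rule sum.cong[OF refl], rule Yp) simp
  also have "\<dots> = (1 + XX)^2 * W M yy - PS QQ M - XX * (PS YY M + 2 * PS QQ M)"
    by (simp add: sum_subtractf sum_distrib_left W_def PS_def sum.distrib distrib_left)
  finally show ?thesis unfolding PS_shift by (simp add: YY_def base2)
qed

lemma sumEp: "XX * PS EE (Suc M) - XX^2 * PS EE M = (1 + XX) * W M yy - PS QQ M - XX * (PS YY M + PS QQ M)"
proof -
  have "XX * (\<Sum>p\<in>{1..M}. XX^(Suc p) * EE (Suc p)) - XX^2 * PS EE M = (\<Sum>p\<in>{1..M}. XX * (XX^(Suc p) * EE (Suc p)) - XX^2 * (XX^p * EE p))"
    by (simp add: sum_distrib_left sum_subtractf PS_def)
  also have "\<dots> = (\<Sum>p\<in>{1..M}. (1 + XX) * (of_nat (Cat p) * yy^p) - XX^p * QQ p - XX * (XX^p * YY p + XX^p * QQ p))"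
    by (rule sum.cong[OF refl], rule Ep) simp
  also have "\<dots> = (1 + XX) * W M yy - PS QQ M - XX * (PS YY M + PS QQ M)"
    by (simp add: sum_subtractf sum_distrib_left W_def PS_def sum.distrib distrib_left)
  finally show ?thesis unfolding PS_shift by (simp add: EE_def base2)
qed




definition UU :: "real fps" where "UU = LimS QQ"
definition YL :: "real fps" where "YL = LimS YY"
definition EL :: "real fps" where "EL = LimS EE"
definition VV :: "real fps" where "VV = LimS QM"
definition DD :: "real fps" where "DD = fps_compose Cf yy - 1"
definition DW :: "real fps" where "DW = fps_compose Cf wm - 1"

lemma yy0: "yy $ 0 = 0" unfolding yy_def by simp
lemma wm0: "wm $ 0 = 0" unfolding wm_def by simp

lemma limU: "UU - XX = (1 + XX) * DD - UU"
proof (rule eqn_all)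
  fix n
  have e1: "eqn n (PS QQ (Suc n) - XX) (UU - XX)" unfolding UU_def by (intro eqn_diff eqn_PS eqn_refl) simp
  have e2: "eqn n ((1 + XX) * W n yy - PS QQ n) ((1 + XX) * DD - UU)"
    unfolding UU_def DD_def by (intro eqn_diff eqn_mult eqn_refl eqn_W eqn_PS yy0) simp_all
  show "eqn n (UU - XX) ((1 + XX) * DD - UU)"
    using eqn_trans[OF eqn_sym[OF e1] e2[folded sumQp]] .
qed

lemma limV: "VV - XX = VV - (1 - XX) * DW"
proof (rule eqn_all)
  fix n
  have e1: "eqn n (PS QM (Suc n) - XX) (VV - XX)" unfolding VV_def by (intro eqn_diff eqn_PS eqn_refl) simp
  have e2: "eqn n (PS QM n - (1 - XX) * W n wm) (VV - (1 - XX) * DW)"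
    unfolding VV_def DW_def by (intro eqn_diff eqn_mult eqn_refl eqn_W eqn_PS wm0) simp_all
  show "eqn n (VV - XX) (VV - (1 - XX) * DW)"
    using eqn_trans[OF eqn_sym[OF e1] e2[folded sumQm]] .
qed

lemma limY: "XX * (YL - XX) = (1 + XX)^2 * DD - UU - XX * (YL + 2 * UU)"
proof (rule eqn_all)
  fix n
  have e1: "eqn n (XX * (PS YY (Suc n) - XX)) (XX * (YL - XX))" unfolding YL_def by (intro eqn_mult eqn_diff eqn_PS eqn_refl) simp
  have e2: "eqn n ((1 + XX)^2 * W n yy - PS QQ n - XX * (PS YY n + 2 * PS QQ n)) ((1 + XX)^2 * DD - UU - XX * (YL + 2 * UU))"
    unfolding UU_def DD_def YL_def by (intro eqn_diff eqn_mult eqn_add eqn_refl eqn_W eqn_PS yy0) simp_all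
  show "eqn n (XX * (YL - XX)) ((1 + XX)^2 * DD - UU - XX * (YL + 2 * UU))"
    using eqn_trans[OF eqn_sym[OF e1] e2[folded sumYp]] .
qed

lemma limE: "XX * EL - XX^2 * EL = (1 + XX) * DD - UU - XX * (YL + UU)"
proof (rule eqn_all)
  fix n
  have e1: "eqn n (XX * PS EE (Suc n) - XX^2 * PS EE n) (XX * EL - XX^2 * EL)" unfolding EL_def by (intro eqn_mult eqn_diff eqn_PS eqn_refl) simp_all
  have e2: "eqn n ((1 + XX) * W n yy - PS QQ n - XX * (PS YY n + PS QQ n)) ((1 + XX) * DD - UU - XX * (YL + UU))"
    unfolding UU_def DD_def YL_def by (intro eqn_diff eqn_mult eqn_add eqn_refl eqn_W eqn_PS yy0) simp_all
  show "eqn n (XX * EL - XX^2 * EL) ((1 + XX) * DD - UU - XX * (YL + UU))"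
    using eqn_trans[OF eqn_sym[OF e1] e2[folded sumEp]] .
qed

lemma alg_cat: assumes h: "(1 - XX) * (c - 1) = XX" shows "(1 - XX)^2 * (c - 1 - XX * (1 - XX) * c^2) = 0"
proof -
  have h1: "(1 - XX) * c = 1" using h by (simp add: algebra_simps)
  have "(1 - XX)^2 * (c - 1 - XX * (1 - XX) * c^2) = (1 - XX) * ((1 - XX) * c) - (1 - XX)^2 - XX * (1 - XX) * ((1 - XX) * c)^2"
    by (simp add: algebra_simps power2_eq_square)
  also have "\<dots> = (1 - XX) - (1 - XX)^2 - XX * (1 - XX)" unfolding h1 by simp
  also have "\<dots> = 0" by (simp add: algebra_simps power2_eq_square)
  finally show ?thesis .
qed

lemma Cf_eq: "Cf - 1 - XX * Cf^2 = 0"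
proof -
  let ?c = "fps_compose Cf wm"
  have h: "(1 - XX) * (?c - 1) = XX" using limV unfolding DW_def by simp
  have "(1 - XX)^2 * (?c - 1 - XX * (1 - XX) * ?c^2) = 0" using alg_cat[OF h] .
  moreover have "(1 - XX)^2 \<noteq> (0::real fps)"
  proof
    assume "(1 - XX)^2 = (0::real fps)"
    then have "((1 - XX)^2) $ 0 = (0::real fps) $ 0" by simp
    then show False by (simp add: power2_eq_square)
  qed
  ultimately have z: "?c - 1 - wm * ?c^2 = 0" unfolding wm_def by simp
  have "fps_compose (Cf - 1 - XX * Cf^2) wm = ?c - 1 - wm * ?c^2"
    by (simp add: fps_compose_sub_distrib fps_compose_mult_distrib[OF wm0] fps_compose_power[OF wm0] wm0)
  then have "fps_compose (Cf - 1 - XX * Cf^2) wm = 0" using z by simp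
  moreover have "wm \<noteq> 0"
  proof
    assume "wm = 0" then have "wm $ 1 = 0" by simp
    then show False unfolding wm_def by simp
  qed
  ultimately show ?thesis using fps_compose_eq_0_iff[OF wm0] by blast
qed

lemma DD_eq: "DD = (XX + XX^2) * (1 + DD)^2"
proof -
  let ?c = "fps_compose Cf yy"
  have "fps_compose (Cf - 1 - XX * Cf^2) yy = ?c - 1 - yy * ?c^2"
    by (simp add: fps_compose_sub_distrib fps_compose_mult_distrib[OF yy0] fps_compose_power[OF yy0] yy0)
  then have "?c - 1 - yy * ?c^2 = 0" using Cf_eq by simp
  then show ?thesis unfolding DD_def yy_def by (simp add: algebra_simps power2_eq_square)
qed




definition Ones :: "real fps" where "Ones = Abs_fps (\<lambda>_. 1)"

lemma Ones_inv: "(1 - XX) * Ones = 1"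
  unfolding Ones_def fps_inverse_gp'[symmetric] by (rule inverse_mult_eq_1) simp

lemma pow1X: "((1 + fps_X :: real fps)^m) $ l = of_nat (m choose l)"
  by (simp add: fps_binomial_of_nat[symmetric] binomial_gbinomial)

lemma XOnes: "(XX * Ones * f) $ s = (\<Sum>l<s. f $ l)"
proof (cases s)
  case 0 then show ?thesis by (simp add: mult.assoc)
next
  case (Suc m)
  have "(XX * Ones * f) $ s = (Ones * f) $ m" using Suc by (simp add: mult.assoc)
  also have "\<dots> = (\<Sum>i=0..m. f $ (m - i))" unfolding fps_mult_nth Ones_def by simp
  also have "\<dots> = (\<Sum>i=0..m. f $ i)"
    by (subst sum.atLeastAtMost_rev) simp
  also have "\<dots> = (\<Sum>l<s. f $ l)" using Suc by (simp add: atLeast0AtMost lessThan_Suc_atMost)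
  finally show ?thesis .
qed

lemma QQ_nth: "QQ p $ l = (\<Sum>w\<in>WI p. of_nat (last w choose l))"
  unfolding QQ_def Qf_def fps_sum_nth pow1X ..

lemma EE_nth: "EE p $ l = (\<Sum>w\<in>WI p. \<Sum>b\<in>{b. b < last w \<and> ext w b}. of_nat (b choose l))"
  unfolding EE_def Ef_def fps_sum_nth pow1X ..

lemma bridge: assumes n: "n \<ge> 1"
  shows "real (I_count n) = PS QQ n $ n + (XX^2 * Ones * PS EE n) $ n"
proof -
  have A: "PS QQ n $ n = (\<Sum>p\<in>{1..n}. \<Sum>w\<in>WI p. real (last w choose (n - p)))"
    by (simp add: PS_nth QQ_nth)
  have "XX^2 * Ones * PS EE n = (\<Sum>p\<in>{1..n}. XX^(Suc p) * (XX * Ones * EE p))"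
    unfolding PS_def sum_distrib_left by (rule sum.cong[OF refl]) (simp add: algebra_simps power2_eq_square)
  then have "(XX^2 * Ones * PS EE n) $ n = (\<Sum>p\<in>{1..n}. (XX^(Suc p) * (XX * Ones * EE p)) $ n)"
    by (simp add: fps_sum_nth)
  also have "\<dots> = (\<Sum>p\<in>{1..<n}. (XX * Ones * EE p) $ (n - p - 1))"
  proof -
    have "{1..n} = insert n {1..<n}" using n by auto
    then have "(\<Sum>p\<in>{1..n}. (XX^(Suc p) * (XX * Ones * EE p)) $ n) = (\<Sum>p\<in>{1..<n}. (XX^(Suc p) * (XX * Ones * EE p)) $ n)"
      by (simp del: power_Suc add: fps_X_power_mult_nth)
    also have "\<dots> = (\<Sum>p\<in>{1..<n}. (XX * Ones * EE p) $ (n - p - 1))"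
      by (rule sum.cong[OF refl]) (auto simp del: power_Suc simp add: fps_X_power_mult_nth)
    finally show ?thesis .
  qed
  also have "\<dots> = (\<Sum>p\<in>{1..<n}. \<Sum>w\<in>WI p. \<Sum>b\<in>{b. b < last w \<and> ext w b}. \<Sum>l<n - p - 1. real (b choose l))"
  proof (rule sum.cong[OF refl])
    fix p
    have "(XX * Ones * EE p) $ (n - p - 1) = (\<Sum>l<n - p - 1. \<Sum>w\<in>WI p. \<Sum>b\<in>{b. b < last w \<and> ext w b}. real (b choose l))"
      unfolding XOnes EE_nth ..
    also have "\<dots> = (\<Sum>w\<in>WI p. \<Sum>l<n - p - 1. \<Sum>b\<in>{b. b < last w \<and> ext w b}. real (b choose l))"
      by (rule sum.swap)
    also have "\<dots> = (\<Sum>w\<in>WI p. \<Sum>b\<in>{b. b < last w \<and> ext w b}. \<Sum>l<n - p - 1. real (b choose l))"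
      by (rule sum.cong[OF refl], rule sum.swap)
    finally show "(XX * Ones * EE p) $ (n - p - 1) = (\<Sum>w\<in>WI p. \<Sum>b\<in>{b. b < last w \<and> ext w b}. \<Sum>l<n - p - 1. real (b choose l))" .
  qed
  finally have B: "(XX^2 * Ones * PS EE n) $ n = (\<Sum>p\<in>{1..<n}. \<Sum>w\<in>WI p. \<Sum>b\<in>{b. b < last w \<and> ext w b}. \<Sum>l<n - p - 1. real (b choose l))" .
  show ?thesis unfolding I_count_Av card_Av_formula[OF n] A B by simp
qed

lemma Av0: "Av 0 = {[]}"
  unfolding Av_def inv_seq_def good_def by auto

lemma I_eq: "Abs_fps (\<lambda>n. real (I_count n)) = 1 + UU + XX^2 * Ones * EL"
proof (rule fps_ext)
  fix n
  show "Abs_fps (\<lambda>n. real (I_count n)) $ n = (1 + UU + XX^2 * Ones * EL) $ n"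
  proof (cases "n = 0")
    case True
    have "I_count 0 = 1" unfolding I_count_Av Av0 by simp
    moreover have "UU $ 0 = 0" unfolding UU_def LimS_def PS_def by simp
    ultimately show ?thesis using True by (simp add: power2_eq_square mult.assoc)
  next
    case False
    then have n: "n \<ge> 1" by simp
    have "eqn n (XX^2 * Ones * PS EE n) (XX^2 * Ones * EL)"
      unfolding EL_def by (intro eqn_mult eqn_refl eqn_PS) simp
    then have "(XX^2 * Ones * PS EE n) $ n = (XX^2 * Ones * EL) $ n" unfolding eqn_def by simp
    moreover have "PS QQ n $ n = UU $ n" unfolding UU_def LimS_def by simp
    ultimately show ?thesis using bridge[OF n] False by simp
  qed
qed




lemma key_alg:
  fixes U Y E D I Os :: "real fps"
  assumes hU: "U - fps_X = (1 + fps_X) * D - U"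
    and hY: "fps_X * (Y - fps_X) = (1 + fps_X)^2 * D - U - fps_X * (Y + 2 * U)"
    and hE: "fps_X * E - fps_X^2 * E = (1 + fps_X) * D - U - fps_X * (Y + U)"
    and hI: "I = 1 + U + fps_X^2 * Os * E"
    and hO: "(1 - fps_X) * Os = 1"
  shows "I * (8 * fps_X * (1 - fps_X)^2) = 2 + fps_X - 10 * fps_X ^ 2 + 4 * fps_X ^ 3
      - (2 - 3 * fps_X) * (1 - 2 * fps_X - 4 * fps_X * U)"
proof -
  have h: "(1 - fps_X) * (I - 1 - U) = fps_X^2 * E"
  proof -
    have "(1 - fps_X) * (I - 1 - U) = fps_X^2 * E * ((1 - fps_X) * Os)" unfolding hI by (simp add: algebra_simps)
    then show ?thesis unfolding hO by simp
  qed
  show ?thesis using hU hY hE h by algebra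
qed

lemma R_sq:
  fixes U D :: "real fps"
  assumes hU: "U - fps_X = (1 + fps_X) * D - U"
    and hD: "D = (fps_X + fps_X^2) * (1 + D)^2"
  shows "(1 - 2 * fps_X - 4 * fps_X * U)^2 = 1 - 4 * fps_X - 4 * fps_X^2"
  using hU hD by algebra

theorem mainTheorem3:
  shows "Abs_fps (\<lambda>n. real (I_count n)) =
    (2 + fps_X - 10 * fps_X ^ 2 + 4 * fps_X ^ 3
      - (2 - 3 * fps_X) * fps_radical (\<lambda>_ _. 1) 2 (1 - 4 * fps_X - 4 * fps_X ^ 2))
    / (8 * fps_X * (1 - fps_X) ^ 2)"
proof -
  let ?I = "Abs_fps (\<lambda>n. real (I_count n))"
  let ?R = "1 - 2 * fps_X - 4 * fps_X * UU"
  let ?b = "1 - 4 * fps_X - 4 * fps_X ^ 2 :: real fps"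
  have key: "?I * (8 * fps_X * (1 - fps_X)^2) = 2 + fps_X - 10 * fps_X ^ 2 + 4 * fps_X ^ 3 - (2 - 3 * fps_X) * ?R"
    by (rule key_alg[OF limU limY limE I_eq Ones_inv])
  have Rsq: "?R ^ Suc 1 = ?b" using R_sq[OF limU DD_eq] by (simp add: numeral_2_eq_2)
  have b0: "?b $ 0 = 1" by simp
  have R0: "?R $ 0 = 1" by simp
  have "?R = fps_radical (\<lambda>_ _. 1) (Suc 1) ?b"
    using radical_unique[of "\<lambda>_ _. 1" 1 ?b ?R] b0 R0 Rsq by simp
  then have rad: "fps_radical (\<lambda>_ _. 1) 2 ?b = ?R" by (simp add: numeral_2_eq_2)
  have den: "8 * fps_X * (1 - fps_X) ^ 2 \<noteq> (0 :: real fps)"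
  proof
    assume "8 * fps_X * (1 - fps_X) ^ 2 = (0 :: real fps)"
    then have "(8 * fps_X * (1 - fps_X) ^ 2) $ 1 = (0 :: real fps) $ 1" by simp
    then show False by (simp add: power2_eq_square fps_mult_nth numeral_2_eq_2)
  qed
  show ?thesis unfolding rad key[symmetric] using fps_divide_times_eq[OF den] by simp
qed


end
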